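(* Let $m\geq 4$. There is a constant $\tilde C_m$, depending only on $m$, with $\tilde C_m>0$ when $m\geq 5$ and $\tilde C_4=0$, such that for every non-negative continuous $\frac{2\pi}{m}$-periodic function $h:\mathbb{R}\to\mathbb{R}$, \[ c_h:=12\,(\partial_{\theta\theta}+4)^{-1}h\ \geq\ \tilde C_m\,\frac{1}{2\pi}\int_{-\pi}^{\pi}h . \] Moreover, if there exists $\theta$ with $c_h(\theta)=0$, then necessarily $h\equiv0$.
   Context: For $m\ge3$, $(\partial_{\theta\theta}+4)^{-1}$ denotes the inverse of $\partial_{\theta\theta}+4$ acting on $2\pi/m$-periodic functions on $\mathbb{R}$ (equivalently $m$-fold symmetric functions on $\mathbb{S}^1=\mathbb{R}/2\pi\mathbb{Z}$), which is well defined since such functions have no Fourier modes $\pm2$. *)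

theory Defs
  imports "HOL-Analysis.Analysis"
begin

definition periodic_m :: "nat \<Rightarrow> (real \<Rightarrow> real) \<Rightarrow> bool" where
  "periodic_m m f \<longleftrightarrow> (\<forall>\<theta>. f (\<theta> + 2 * pi / real m) = f \<theta>)"

text \<open>The inverse of (d^2/d theta^2 + 4) on (2 pi / m)-periodic functions:
  the unique (2 pi / m)-periodic twice differentiable u with u'' + 4 u = h.\<close>
definition inv_op :: "nat \<Rightarrow> (real \<Rightarrow> real) \<Rightarrow> real \<Rightarrow> real" where
  "inv_op m h = (THE u. periodic_m m u
      \<and> (\<forall>\<theta>. (u has_real_derivative deriv u \<theta>) (at \<theta>))
      \<and> (\<forall>\<theta>. (deriv u has_real_derivative (h \<theta> - 4 * u \<theta>)) (at \<theta>)))"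

end

theory Submission
  imports Defs
begin

lemma antideriv_exists:
  fixes f :: "real \<Rightarrow> real"
  assumes "continuous_on UNIV f"
  shows "\<exists>F. \<forall>x. (F has_real_derivative f x) (at x)"
proof -
  define F where "F x = integral {0..x} f - integral {x..0} f" for x
  have key: "F y = integral {c..y} f - integral {c..0} f" if "c \<le> y" "c \<le> 0" for c y
  proof (cases "0 \<le> y")
    case True
    have "integral {c..0} f + integral {0..y} f = integral {c..y} f"
      using that True by (intro Henstock_Kurzweil_Integration.integral_combine integrable_continuous_real continuous_on_subset[OF assms]) auto
    moreover have "integral {y..0} f = 0" using True
      by (cases "y = 0") auto
    ultimately show ?thesis unfolding F_def by linarith
  next
    case False
    have "integral {c..y} f + integral {y..0} f = integral {c..0} f"
      using that False by (intro Henstock_Kurzweil_Integration.integral_combine integrable_continuous_real continuous_on_subset[OF assms]) auto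
    moreover have "integral {0..y} f = 0" using False by auto
    ultimately show ?thesis unfolding F_def by linarith
  qed
  have "(F has_real_derivative f x) (at x)" for x
  proof -
    define c where "c = min (x - 1) (-1)"
    have "((\<lambda>y. integral {c..y} f) has_real_derivative f x) (at x within {c..x+1})"
      by (rule integral_has_real_derivative) (auto simp: c_def intro: continuous_on_subset[OF assms])
    then have "((\<lambda>y. integral {c..y} f) has_real_derivative f x) (at x within {c<..<x+1})"
      by (rule has_field_derivative_subset) auto
    then have "((\<lambda>y. integral {c..y} f) has_real_derivative f x) (at x)"
      by (subst (asm) at_within_open) (auto simp: c_def)
    then have "((\<lambda>y. integral {c..y} f - integral {c..0} f) has_real_derivative f x) (at x)"
      by (auto intro!: derivative_eq_intros)
    then show ?thesis
      by (rule has_field_derivative_transform_within_open[where S="{c<..<x+1}"])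
         (use key[of c] in \<open>auto simp: c_def\<close>)
  qed
  then show ?thesis by blast
qed

lemma K1: "cos A * (cos (A+T) - cos (A-T)) + sin A * (sin (A+T) - sin (A-T)) = (0::real)"
  by (simp add: cos_add sin_add cos_diff sin_diff algebra_simps)

lemma K2: "-2 * sin A * (cos (A+T) - cos (A-T)) + 2 * cos A * (sin (A+T) - sin (A-T)) = 4 * sin (T::real)"
proof -
  have p: "sin A * sin A + cos A * cos A = 1" using sin_cos_squared_add[of A] by (simp add: power2_eq_square)
  have "-2 * sin A * (cos (A+T) - cos (A-T)) + 2 * cos A * (sin (A+T) - sin (A-T))
      = 4 * sin T * (sin A * sin A + cos A * cos A)"
    unfolding cos_add sin_add cos_diff sin_diff by algebra
  then show ?thesis using p by simp
qed

lemma K3: "cos (A + 2*T) * cos (2*T) + sin (A + 2*T) * sin (2*T) = cos (A::real)"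
  using cos_diff[of "A + 2*T" "2*T"] by simp

lemma K4: "- cos (A + 2*T) * sin (2*T) + sin (A + 2*T) * cos (2*T) = sin (A::real)"
  using sin_diff[of "A + 2*T" "2*T"] by (simp add: algebra_simps)

lemma K5: "cos (2*b + 2*T) - cos (2*T) * cos (2*b) + sin (2*T) * sin (2*b) = (0::real)"
  by (simp add: cos_add algebra_simps)

lemma K6: "sin (2*b + 2*T) - sin (2*T) * cos (2*b) - cos (2*T) * sin (2*b) = (0::real)"
  by (simp add: sin_add algebra_simps)

lemma K7: "cos A * cos (2*y) + sin A * sin (2*y) = cos (A - 2*(y::real))"
  by (simp add: cos_diff)


definition DD :: "real \<Rightarrow> (real \<Rightarrow> real) \<Rightarrow> real \<Rightarrow> real" where
  "DD T P x = P x - P (x - T)"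

definition UU :: "real \<Rightarrow> (real \<Rightarrow> real) \<Rightarrow> (real \<Rightarrow> real) \<Rightarrow> real \<Rightarrow> real" where
  "UU T Pc Ps x = (cos (2*x - T) * DD T Pc x + sin (2*x - T) * DD T Ps x) / (4 * sin T)"

definition UU1 :: "real \<Rightarrow> (real \<Rightarrow> real) \<Rightarrow> (real \<Rightarrow> real) \<Rightarrow> real \<Rightarrow> real" where
  "UU1 T Pc Ps x = (-2 * sin (2*x - T) * DD T Pc x + 2 * cos (2*x - T) * DD T Ps x) / (4 * sin T)"

context
  fixes h :: "real \<Rightarrow> real" and T :: real and Pc Ps H :: "real \<Rightarrow> real"
  assumes hnn: "\<And>x. h x \<ge> 0" and hper: "\<And>x. h (x + T) = h x"
    and T0: "0 < T" and T1: "T \<le> pi/2"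
    and dPc: "\<And>x. (Pc has_real_derivative cos(2*x) * h x) (at x)"
    and dPs: "\<And>x. (Ps has_real_derivative sin(2*x) * h x) (at x)"
    and dH: "\<And>x. (H has_real_derivative h x) (at x)"
begin

lemma hper': "h (x - T) = h x"
  using hper[of "x - T"] by simp

lemma sinT: "sin T > 0"
  using T0 T1 by (intro sin_gt_zero) auto

lemma DERIV_shift: assumes "\<And>y. (P has_real_derivative f y) (at y)"
  shows "((\<lambda>y. P (y + c)) has_real_derivative f (x + c)) (at x)"
proof -
  have "((\<lambda>y. y + c) has_real_derivative 1) (at x)" by (auto intro!: derivative_eq_intros)
  from DERIV_chain2[where f=P and g="\<lambda>y. y+c", OF assms this] show ?thesis by simp
qed

lemma dDD: assumes "\<And>y. (P has_real_derivative f y) (at y)"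
  shows "(DD T P has_real_derivative f x - f (x - T)) (at x)"
proof -
  have "((\<lambda>y. P y - P (y + (-T))) has_real_derivative f x - f (x + (-T))) (at x)"
    by (intro DERIV_diff assms DERIV_shift)
  then show ?thesis unfolding DD_def[abs_def] by simp
qed

lemma dDC: "(DD T Pc has_real_derivative (cos (2*x) - cos (2*x - 2*T)) * h x) (at x)"
  using dDD[OF dPc, of x] by (simp add: hper' algebra_simps)

lemma dDS: "(DD T Ps has_real_derivative (sin (2*x) - sin (2*x - 2*T)) * h x) (at x)"
  using dDD[OF dPs, of x] by (simp add: hper' algebra_simps)

lemma dcos: "((\<lambda>x. cos (2*x - T)) has_real_derivative -2 * sin (2*x - T)) (at x)"
  by (auto intro!: derivative_eq_intros)

lemma dsin: "((\<lambda>x. sin (2*x - T)) has_real_derivative 2 * cos (2*x - T)) (at x)"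
  by (auto intro!: derivative_eq_intros)

lemma DERIV_eqI: "(f has_real_derivative a) F \<Longrightarrow> a = b \<Longrightarrow> (f has_real_derivative b) F"
  by simp

lemma dU: "(UU T Pc Ps has_real_derivative UU1 T Pc Ps x) (at x)"
proof -
  have D: "(UU T Pc Ps has_real_derivative
     ((-2 * sin (2*x - T) * DD T Pc x + ((cos (2*x) - cos (2*x - 2*T)) * h x) * cos (2*x - T))
     + (2 * cos (2*x - T) * DD T Ps x + ((sin (2*x) - sin (2*x - 2*T)) * h x) * sin (2*x - T))) / (4 * sin T)) (at x)"
    unfolding UU_def[abs_def] by (intro DERIV_cdivide DERIV_add DERIV_mult dcos dsin dDC dDS)
  have e: "cos (2*x - T) * (cos (2*x) - cos (2*x - 2*T)) + sin (2*x - T) * (sin (2*x) - sin (2*x - 2*T)) = 0"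
    using K1[of "2*x - T" T] by (simp add: algebra_simps)
  have "(-2 * sin (2*x - T) * DD T Pc x + ((cos (2*x) - cos (2*x - 2*T)) * h x) * cos (2*x - T))
     + (2 * cos (2*x - T) * DD T Ps x + ((sin (2*x) - sin (2*x - 2*T)) * h x) * sin (2*x - T))
     = -2 * sin (2*x - T) * DD T Pc x + 2 * cos (2*x - T) * DD T Ps x + h x *
      (cos (2*x - T) * (cos (2*x) - cos (2*x - 2*T)) + sin (2*x - T) * (sin (2*x) - sin (2*x - 2*T)))"
    by algebra
  also have "\<dots> = -2 * sin (2*x - T) * DD T Pc x + 2 * cos (2*x - T) * DD T Ps x" using e by simp
  finally have eq: "(-2 * sin (2*x - T) * DD T Pc x + ((cos (2*x) - cos (2*x - 2*T)) * h x) * cos (2*x - T))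
     + (2 * cos (2*x - T) * DD T Ps x + ((sin (2*x) - sin (2*x - 2*T)) * h x) * sin (2*x - T)) = -2 * sin (2*x - T) * DD T Pc x + 2 * cos (2*x - T) * DD T Ps x" .
  show ?thesis unfolding UU1_def using D[unfolded eq] .
qed

lemma dU1: "(UU1 T Pc Ps has_real_derivative h x - 4 * UU T Pc Ps x) (at x)"
proof -
  have D: "(UU1 T Pc Ps has_real_derivative
     ((-2 * (2 * cos (2*x - T)) * DD T Pc x + ((cos (2*x) - cos (2*x - 2*T)) * h x) * (-2 * sin (2*x - T)))
     + (2 * (-2 * sin (2*x - T)) * DD T Ps x + ((sin (2*x) - sin (2*x - 2*T)) * h x) * (2 * cos (2*x - T)))) / (4 * sin T)) (at x)"
    unfolding UU1_def[abs_def] by (intro DERIV_cdivide DERIV_add DERIV_mult DERIV_cmult dcos dsin dDC dDS)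
  have e: "-2 * sin (2*x - T) * (cos (2*x) - cos (2*x - 2*T)) + 2 * cos (2*x - T) * (sin (2*x) - sin (2*x - 2*T)) = 4 * sin T"
    using K2[of "2*x - T" T] by (simp add: algebra_simps)
  have "(-2 * (2 * cos (2*x - T)) * DD T Pc x + ((cos (2*x) - cos (2*x - 2*T)) * h x) * (-2 * sin (2*x - T)))
     + (2 * (-2 * sin (2*x - T)) * DD T Ps x + ((sin (2*x) - sin (2*x - 2*T)) * h x) * (2 * cos (2*x - T)))
     = -4 * (cos (2*x - T) * DD T Pc x + sin (2*x - T) * DD T Ps x) + h x *
      (-2 * sin (2*x - T) * (cos (2*x) - cos (2*x - 2*T)) + 2 * cos (2*x - T) * (sin (2*x) - sin (2*x - 2*T)))"
    by algebra
  also have "\<dots> = -4 * (cos (2*x - T) * DD T Pc x + sin (2*x - T) * DD T Ps x) + h x * (4 * sin T)" using e by simp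
  finally show ?thesis unfolding UU_def using sinT by (intro DERIV_eqI[OF D]) (simp add: field_simps)
qed

lemma shiftC: "Pc (b+T) - Pc (a+T) = cos(2*T)*(Pc b - Pc a) - sin(2*T)*(Ps b - Ps a)"
proof -
  let ?F = "\<lambda>b. Pc (b+T) - Pc (a+T) - (cos(2*T)*(Pc b - Pc a) - sin(2*T)*(Ps b - Ps a))"
  have "DERIV ?F x :> 0" for x
  proof -
    have D: "DERIV ?F x :> cos(2*(x+T))*h(x+T) - 0 - (cos(2*T)*(cos(2*x)*h x - 0) - sin(2*T)*(sin(2*x)*h x - 0))"
      by (intro DERIV_diff DERIV_cmult DERIV_shift[OF dPc] dPc dPs DERIV_const)
    have "cos(2*(x+T))*h(x+T) - 0 - (cos(2*T)*(cos(2*x)*h x - 0) - sin(2*T)*(sin(2*x)*h x - 0))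
      = h x * (cos (2*x + 2*T) - cos (2*T) * cos (2*x) + sin (2*T) * sin (2*x))"
      by (simp only: hper) (simp add: algebra_simps)
    also have "\<dots> = 0" by (simp add: K5)
    finally show ?thesis using D by simp
  qed
  then have all: "\<forall>x. DERIV ?F x :> 0" by blast
  have "?F b = ?F a" by (rule DERIV_isconst_all[OF all])
  then show ?thesis by simp
qed

lemma shiftS: "Ps (b+T) - Ps (a+T) = sin(2*T)*(Pc b - Pc a) + cos(2*T)*(Ps b - Ps a)"
proof -
  let ?F = "\<lambda>b. Ps (b+T) - Ps (a+T) - (sin(2*T)*(Pc b - Pc a) + cos(2*T)*(Ps b - Ps a))"
  have "DERIV ?F x :> 0" for x
  proof -
    have D: "DERIV ?F x :> sin(2*(x+T))*h(x+T) - 0 - (sin(2*T)*(cos(2*x)*h x - 0) + cos(2*T)*(sin(2*x)*h x - 0))"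
      by (intro DERIV_diff DERIV_add DERIV_cmult DERIV_shift[OF dPs] dPc dPs DERIV_const)
    have "sin(2*(x+T))*h(x+T) - 0 - (sin(2*T)*(cos(2*x)*h x - 0) + cos(2*T)*(sin(2*x)*h x - 0))
      = h x * (sin (2*x + 2*T) - sin (2*T) * cos (2*x) - cos (2*T) * sin (2*x))"
      by (simp only: hper) (simp add: algebra_simps)
    also have "\<dots> = 0" by (simp add: K6)
    finally show ?thesis using D by simp
  qed
  then have all: "\<forall>x. DERIV ?F x :> 0" by blast
  have "?F b = ?F a" by (rule DERIV_isconst_all[OF all])
  then show ?thesis by simp
qed

lemma Uper: "UU T Pc Ps (x + T) = UU T Pc Ps x"
proof -
  define A where "A = 2*x - T"
  have C: "DD T Pc (x+T) = cos(2*T) * DD T Pc x - sin(2*T) * DD T Ps x"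
    using shiftC[of x "x - T"] unfolding DD_def by simp
  have S: "DD T Ps (x+T) = sin(2*T) * DD T Pc x + cos(2*T) * DD T Ps x"
    using shiftS[of x "x - T"] unfolding DD_def by simp
  have a: "2*(x+T) - T = A + 2*T" unfolding A_def by simp
  have "cos (A + 2*T) * (cos(2*T) * DD T Pc x - sin(2*T) * DD T Ps x) + sin (A + 2*T) * (sin(2*T) * DD T Pc x + cos(2*T) * DD T Ps x)
    = (cos (A + 2*T) * cos (2*T) + sin (A + 2*T) * sin (2*T)) * DD T Pc x + (- cos (A + 2*T) * sin (2*T) + sin (A + 2*T) * cos (2*T)) * DD T Ps x"
    by algebra
  also have "\<dots> = cos A * DD T Pc x + sin A * DD T Ps x" by (simp only: K3 K4)
  finally show ?thesis unfolding UU_def C S a by (simp add: A_def)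
qed

lemma lower: "4 * sin T * UU T Pc Ps x \<ge> cos T * (H x - H (x - T))"
proof -
  define A where "A = 2*x - T"
  define \<phi> where "\<phi> s = cos A * Pc s + sin A * Ps s - cos T * H s" for s
  have "\<phi> (x - T) \<le> \<phi> x"
  proof (rule DERIV_nonneg_imp_nondecreasing[where f=\<phi>])
    fix s assume s: "x - T \<le> s" "s \<le> x"
    have D: "DERIV \<phi> s :> cos A * (cos(2 * s)*h s) + sin A * (sin(2 * s)*h s) - cos T * h s"
      unfolding \<phi>_def[abs_def] by (intro DERIV_diff DERIV_add DERIV_cmult dPc dPs dH)
    have "cos A * (cos(2 * s)*h s) + sin A * (sin(2 * s)*h s) - cos T * h s = (cos A * cos (2 * s) + sin A * sin (2 * s) - cos T) * h s"
      by algebra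
    also have "\<dots> = (cos (A - 2 * s) - cos T) * h s" by (simp only: K7)
    finally have e: "cos A * (cos(2 * s)*h s) + sin A * (sin(2 * s)*h s) - cos T * h s = (cos (A - 2 * s) - cos T) * h s" .
    have "\<bar>A - 2 * s\<bar> \<le> T" using s unfolding A_def by auto
    then have "cos T \<le> cos \<bar>A - 2 * s\<bar>" using T1 by (intro cos_monotone_0_pi_le) auto
    then have "cos T \<le> cos (A - 2 * s)" by simp
    then have "0 \<le> (cos (A - 2 * s) - cos T) * h s" using hnn[of s] by simp
    then show "\<exists>y. DERIV \<phi> s :> y \<and> 0 \<le> y" using D e by auto
  qed (use T0 in auto)
  moreover have "4 * sin T * UU T Pc Ps x = cos A * DD T Pc x + sin A * DD T Ps x"
    unfolding UU_def A_def using sinT by simp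
  ultimately show ?thesis unfolding \<phi>_def DD_def by (simp add: algebra_simps)
qed

lemma Hmono: "a \<le> b \<Longrightarrow> H a \<le> H b"
  by (rule DERIV_nonneg_imp_nondecreasing) (use dH hnn in auto)

lemma Hshift: "H (y + T) - H y = H (z + T) - H z"
proof -
  have "DERIV (\<lambda>y. H (y + T) - H y) x :> h (x + T) - h x" for x
    by (intro DERIV_diff DERIV_shift[OF dH] dH)
  then have "\<forall>x. DERIV (\<lambda>y. H (y + T) - H y) x :> 0" by (simp add: hper)
  from DERIV_isconst_all[OF this] show ?thesis .
qed

lemma Hsum: "H (a + real n * T) = H a + real n * (H T - H 0)"
proof (induction n)
  case (Suc n)
  have "H (a + real n * T + T) - H (a + real n * T) = H (0 + T) - H 0" by (rule Hshift)
  then show ?case using Suc by (simp add: algebra_simps)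
qed simp

lemma zero_case: assumes "UU T Pc Ps x0 = 0" shows "h y = 0"
proof -
  define A where "A = 2*x0 - T"
  define \<psi> where "\<psi> s = cos A * Pc s + sin A * Ps s" for s
  have D: "DERIV \<psi> s :> cos (A - 2 * s) * h s" for s
  proof -
    have "DERIV \<psi> s :> cos A * (cos(2 * s)*h s) + sin A * (sin(2 * s)*h s)"
      unfolding \<psi>_def[abs_def] by (intro DERIV_add DERIV_cmult dPc dPs)
    moreover have "cos A * (cos(2 * s)*h s) + sin A * (sin(2 * s)*h s) = (cos A * cos (2 * s) + sin A * sin (2 * s)) * h s"
      by algebra
    ultimately show ?thesis by (simp only: K7)
  qed
  have pos: "cos (A - 2 * s) \<ge> 0" if "x0 - T \<le> s" "s \<le> x0" for s
    using that T1 unfolding A_def by (intro cos_ge_zero) auto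
  have mono: "\<psi> a \<le> \<psi> b" if "x0 - T \<le> a" "a \<le> b" "b \<le> x0" for a b
  proof (rule DERIV_nonneg_imp_nondecreasing[where f=\<psi>])
    show "a \<le> b" using that by simp
    fix s assume "a \<le> s" "s \<le> b"
    then have "0 \<le> cos (A - 2 * s) * h s" using that pos hnn by (intro mult_nonneg_nonneg) auto
    then show "\<exists>y. DERIV \<psi> s :> y \<and> 0 \<le> y" using D by blast
  qed
  have eq: "\<psi> x0 = \<psi> (x0 - T)"
    using assms sinT unfolding UU_def \<psi>_def A_def DD_def by (simp add: algebra_simps)
  have hz: "h s = 0" if s: "x0 - T < s" "s < x0" for s
  proof -
    have "cos (A - 2 * s) * h s = 0"
    proof (rule DERIV_local_max[OF D])
      show "0 < min (s - (x0 - T)) (x0 - s)" using s by auto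
      show "\<forall>y. \<bar>s - y\<bar> < min (s - (x0 - T)) (x0 - s) \<longrightarrow> \<psi> y \<le> \<psi> s"
      proof (intro allI impI)
        fix y assume "\<bar>s - y\<bar> < min (s - (x0 - T)) (x0 - s)"
        then have y: "x0 - T \<le> y" "y \<le> x0" by auto
        have "\<psi> y \<le> \<psi> x0" using mono[of y x0] y by auto
        also have "\<dots> = \<psi> (x0 - T)" by (rule eq)
        also have "\<dots> \<le> \<psi> s" using mono[of "x0 - T" s] s by auto
        finally show "\<psi> y \<le> \<psi> s" .
      qed
    qed
    moreover have "cos (A - 2 * s) > 0"
      using s T1 unfolding A_def by (intro cos_gt_zero_pi) auto
    ultimately show ?thesis by simp
  qed
  have "H x0 = H (x0 - T)"
  proof (rule DERIV_isconst_end[where f=H])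
    show "x0 - T < x0" using T0 by simp
    show "continuous_on {x0 - T..x0} H"
      using dH by (intro continuous_at_imp_continuous_on) (auto intro: DERIV_isCont)
    show "DERIV H x :> 0" if "x0 - T < x" "x < x0" for x
      using dH[of x] hz[OF that] by simp
  qed
  then have per: "H (z + T) = H z" for z
    using Hshift[of z "x0 - T"] by simp
  have perN: "H (z + real n * T) = H z" for z n
    by (induction n) (auto simp: algebra_simps per[of "z + real _ * T", simplified algebra_simps])
  have const: "H z = H 0" for z
  proof (cases "0 \<le> z")
    case True
    obtain n :: nat where n: "z / T < real n" using reals_Archimedean2 by blast
    then have "z \<le> 0 + real n * T" using T0 by (simp add: field_simps)
    then have "H z \<le> H 0" using Hmono perN[of 0 n] by fastforce
    moreover have "H 0 \<le> H z" using Hmono True by blast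
    ultimately show ?thesis by simp
  next
    case False
    obtain n :: nat where n: "- z / T < real n" using reals_Archimedean2 by blast
    then have "0 \<le> z + real n * T" using T0 by (simp add: field_simps)
    then have "H 0 \<le> H z" using Hmono perN[of z n] by fastforce
    moreover have "H z \<le> H 0" using Hmono False by simp
    ultimately show ?thesis by simp
  qed
  obtain c where "c = H 0" by blast
  then have Hc: "H = (\<lambda>_. c)" using const by (intro ext) simp
  have "DERIV (\<lambda>_. c) y :> h y" using dH[of y] unfolding Hc .
  moreover have "DERIV (\<lambda>_. c) y :> 0" by simp
  ultimately show ?thesis by (rule DERIV_unique)
qed

end

lemma uniq:
  fixes w wd :: "real \<Rightarrow> real" and T :: real
  assumes dw: "\<And>t. (w has_real_derivative wd t) (at t)"
    and dw1: "\<And>t. (wd has_real_derivative -4 * w t) (at t)"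
    and per: "\<And>t. w (t + T) = w t" and c: "cos (2*T) \<noteq> 1"
  shows "w t = 0"
proof -
  define \<alpha> where "\<alpha> = w 0"
  define \<beta> where "\<beta> = wd 0 / 2"
  define z where "z t = w t - \<alpha> * cos (2*t) - \<beta> * sin (2*t)" for t
  define z1 where "z1 t = wd t + 2 * \<alpha> * sin (2*t) - 2 * \<beta> * cos (2*t)" for t
  define E where "E t = (z1 t)^2 + 4 * (z t)^2" for t
  have dz: "DERIV z t :> z1 t" for t
    unfolding z_def[abs_def] z1_def by (auto intro!: derivative_eq_intros dw)
  have dz1: "DERIV z1 t :> -4 * z t" for t
    unfolding z1_def[abs_def] z_def by (auto intro!: derivative_eq_intros dw1 simp: algebra_simps)
  have dE: "\<forall>t. DERIV E t :> 0"
  proof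
    fix t
    have "DERIV E t :> 2 * z1 t * (-4 * z t) + 4 * (2 * z t * z1 t)"
      unfolding E_def[abs_def] by (auto intro!: derivative_eq_intros dz dz1)
    then show "DERIV E t :> 0" by (simp add: algebra_simps)
  qed
  have wf: "w t = \<alpha> * cos (2*t) + \<beta> * sin (2*t)" for t
  proof -
    have "E t = E 0" by (rule DERIV_isconst_all[OF dE])
    also have "E 0 = 0" unfolding E_def z_def z1_def \<alpha>_def \<beta>_def by simp
    finally have "z t = 0" unfolding E_def
      by (metis add_nonneg_eq_0_iff mult_eq_0_iff power_eq_0_iff zero_le_power2 mult_nonneg_nonneg zero_le_numeral zero_neq_numeral)
    then show ?thesis unfolding z_def by simp
  qed
  have e1: "\<alpha> * (cos (2*T) - 1) + \<beta> * sin (2*T) = 0"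
    using per[of 0] wf[of T] wf[of 0] by (simp add: algebra_simps)
  have "w (pi/4 + T) = w (pi/4)" using per[of "pi/4"] by (simp add: add.commute)
  moreover have "2 * (pi/4 + T) = pi/2 + 2*T" by simp
  ultimately have e2: "- \<alpha> * sin (2*T) + \<beta> * (cos (2*T) - 1) = 0"
    using wf[of "pi/4 + T"] wf[of "pi/4"] by (simp add: cos_add sin_add algebra_simps)
  have "\<alpha> * ((cos (2*T) - 1)^2 + (sin (2*T))^2) = (cos (2*T) - 1) * (\<alpha> * (cos (2*T) - 1) + \<beta> * sin (2*T)) - sin (2*T) * (- \<alpha> * sin (2*T) + \<beta> * (cos (2*T) - 1))"
    by algebra
  also have "\<dots> = 0" using e1 e2 by simp
  finally have a0: "\<alpha> = 0" using c by (simp add: add_nonneg_eq_0_iff)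
  then have "\<beta> * (cos (2*T) - 1) = 0" using e2 by simp
  then have "\<beta> = 0" using c by simp
  then show ?thesis using wf[of t] a0 by simp
qed

theorem mainTheorem6:
  fixes m :: nat
  assumes "m \<ge> 4"
  shows "\<exists>C::real. (m \<ge> 5 \<longrightarrow> C > 0) \<and> (m = 4 \<longrightarrow> C = 0) \<and>
    (\<forall>h :: real \<Rightarrow> real. continuous_on UNIV h \<and> (\<forall>\<theta>. h \<theta> \<ge> 0) \<and> periodic_m m h \<longrightarrow>
       (\<forall>\<theta>. 12 * inv_op m h \<theta> \<ge> C * (1 / (2 * pi) * integral {-pi..pi} h)) \<and>
       ((\<exists>\<theta>. 12 * inv_op m h \<theta> = 0) \<longrightarrow> (\<forall>\<theta>. h \<theta> = 0)))"
proof -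
  define T where "T = 2 * pi / real m"
  have m0: "real m \<ge> 4" using assms by simp
  have T0: "0 < T" unfolding T_def using m0 by simp
  have T1: "T \<le> pi/2" unfolding T_def using m0 by (simp add: field_simps)
  have mT: "real m * T = 2 * pi" unfolding T_def using m0 by simp
  have sT: "sin T > 0" using T0 T1 by (intro sin_gt_zero) auto
  have c2: "cos (2*T) \<noteq> 1"
  proof -
    have "cos (2*T) < cos 0" using T0 T1 by (intro cos_monotone_0_pi) auto
    then show ?thesis by simp
  qed
  define C where "C = 6 * pi * cos T / (real m * sin T)"
  have C5: "C > 0" if "m \<ge> 5"
  proof -
    have "real m \<ge> 5" using that by simp
    then have "T < pi/2" unfolding T_def by (simp add: field_simps)
    then have "cos T > 0" using T0 by (intro cos_gt_zero_pi) auto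
    then show ?thesis unfolding C_def using sT m0 by simp
  qed
  have C4: "C = 0" if "m = 4"
  proof -
    have "T = pi/2" unfolding T_def that by simp
    then have "cos T = 0" by (simp only: cos_pi_half)
    then show ?thesis unfolding C_def by simp
  qed
  have main: "(\<forall>\<theta>. 12 * inv_op m h \<theta> \<ge> C * (1 / (2 * pi) * integral {-pi..pi} h)) \<and>
       ((\<exists>\<theta>. 12 * inv_op m h \<theta> = 0) \<longrightarrow> (\<forall>\<theta>. h \<theta> = 0))"
    if hc: "continuous_on UNIV h" and hnn: "\<And>\<theta>. h \<theta> \<ge> 0" and hp: "periodic_m m h" for h
  proof -
    have hper: "\<And>x. h (x + T) = h x" using hp unfolding periodic_m_def T_def by simp
    have "continuous_on UNIV (\<lambda>x. cos(2*x) * h x)" by (intro continuous_on_mult hc continuous_intros)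
    from antideriv_exists[OF this] obtain Pc where dPc0: "\<forall>x. (Pc has_real_derivative cos(2*x) * h x) (at x)" by blast
    have dPc: "\<And>x. (Pc has_real_derivative cos(2*x) * h x) (at x)" using dPc0 by blast
    have "continuous_on UNIV (\<lambda>x. sin(2*x) * h x)" by (intro continuous_on_mult hc continuous_intros)
    from antideriv_exists[OF this] obtain Ps where dPs0: "\<forall>x. (Ps has_real_derivative sin(2*x) * h x) (at x)" by blast
    have dPs: "\<And>x. (Ps has_real_derivative sin(2*x) * h x) (at x)" using dPs0 by blast
    from antideriv_exists[OF hc] obtain H where dH0: "\<forall>x. (H has_real_derivative h x) (at x)" by blast
    have dH: "\<And>x. (H has_real_derivative h x) (at x)" using dH0 by blast
    note ctx = hnn hper T0 T1 dPc dPs dH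
    define u where "u = UU T Pc Ps"
    have du: "deriv u = UU1 T Pc Ps"
      unfolding u_def by (rule ext) (rule DERIV_imp_deriv[OF dU[OF ctx]])
    have Pu: "periodic_m m u \<and> (\<forall>\<theta>. (u has_real_derivative deriv u \<theta>) (at \<theta>))
      \<and> (\<forall>\<theta>. (deriv u has_real_derivative (h \<theta> - 4 * u \<theta>)) (at \<theta>))"
    proof (intro conjI)
      show "periodic_m m u" unfolding periodic_m_def u_def T_def[symmetric] using Uper[OF ctx] by blast
      show "\<forall>\<theta>. (u has_real_derivative deriv u \<theta>) (at \<theta>)" unfolding du unfolding u_def using dU[OF ctx] by blast
      show "\<forall>\<theta>. (deriv u has_real_derivative (h \<theta> - 4 * u \<theta>)) (at \<theta>)" unfolding du unfolding u_def using dU1[OF ctx] by blast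
    qed
    have inv: "inv_op m h = u"
      unfolding inv_op_def
    proof (rule the_equality)
      show "periodic_m m u \<and> (\<forall>\<theta>. (u has_real_derivative deriv u \<theta>) (at \<theta>))
      \<and> (\<forall>\<theta>. (deriv u has_real_derivative (h \<theta> - 4 * u \<theta>)) (at \<theta>))" by (rule Pu)
      fix v assume Pv: "periodic_m m v \<and> (\<forall>\<theta>. (v has_real_derivative deriv v \<theta>) (at \<theta>))
      \<and> (\<forall>\<theta>. (deriv v has_real_derivative (h \<theta> - 4 * v \<theta>)) (at \<theta>))"
      have "v t - u t = 0" for t
      proof (rule uniq[where w="\<lambda>t. v t - u t" and wd="\<lambda>t. deriv v t - deriv u t" and T=T])
        show "((\<lambda>t. v t - u t) has_real_derivative deriv v t - deriv u t) (at t)" for t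
          using Pv Pu by (intro DERIV_diff) auto
        show "((\<lambda>t. deriv v t - deriv u t) has_real_derivative -4 * (v t - u t)) (at t)" for t
        proof -
          have "((\<lambda>t. deriv v t - deriv u t) has_real_derivative (h t - 4 * v t) - (h t - 4 * u t)) (at t)"
            using Pv Pu by (intro DERIV_diff) auto
          then show ?thesis by (simp add: algebra_simps)
        qed
        show "v (t + T) - u (t + T) = v t - u t" for t
          using Pv Pu unfolding periodic_m_def T_def[symmetric] by simp
        show "cos (2*T) \<noteq> 1" by (rule c2)
      qed
      then show "v = u" by auto
    qed
    have Hs: "H x - H (x - T) = H T - H 0" for x
      using Hshift[OF ctx, of "x - T" 0] by simp
    have "(h has_integral (H pi - H (-pi))) {-pi..pi}"
      using dH by (intro fundamental_theorem_of_calculus)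
        (auto simp: has_real_derivative_iff_has_vector_derivative[symmetric] intro: has_field_derivative_at_within)
    then have I: "integral {-pi..pi} h = H pi - H (-pi)" by (rule integral_unique)
    have "H (-pi + real m * T) = H (-pi) + real m * (H T - H 0)" by (rule Hsum[OF ctx])
    then have I2: "integral {-pi..pi} h = real m * (H T - H 0)" using I mT by simp
    have bound: "12 * inv_op m h \<theta> \<ge> C * (1 / (2 * pi) * integral {-pi..pi} h)" for \<theta>
    proof -
      have L: "4 * sin T * u \<theta> \<ge> cos T * (H T - H 0)"
        using lower[OF ctx, of \<theta>] Hs[of \<theta>] unfolding u_def by simp
      have "C * (1 / (2 * pi) * integral {-pi..pi} h) = 3 * (cos T * (H T - H 0)) / sin T"
        unfolding I2 C_def using m0 sT by (simp add: field_simps)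
      also have "\<dots> \<le> 3 * (4 * sin T * u \<theta>) / sin T"
        using L sT by (intro divide_right_mono mult_left_mono) auto
      also have "\<dots> = 12 * u \<theta>" using sT by simp
      finally show ?thesis unfolding inv .
    qed
    have zero: "\<forall>\<theta>. h \<theta> = 0" if ex: "\<exists>\<theta>. 12 * inv_op m h \<theta> = 0"
    proof -
      obtain x0 where "12 * inv_op m h x0 = 0" using ex by blast
      then have "UU T Pc Ps x0 = 0" unfolding inv u_def by simp
      then show ?thesis using zero_case[OF ctx] by blast
    qed
    show ?thesis using bound zero by blast
  qed
  show ?thesis
  proof (rule exI[of _ C], intro conjI)
    show "m \<ge> 5 \<longrightarrow> C > 0" using C5 by blast
    show "m = 4 \<longrightarrow> C = 0" using C4 by blast
    show "\<forall>h :: real \<Rightarrow> real. continuous_on UNIV h \<and> (\<forall>\<theta>. h \<theta> \<ge> 0) \<and> periodic_m m h \<longrightarrow>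
       (\<forall>\<theta>. 12 * inv_op m h \<theta> \<ge> C * (1 / (2 * pi) * integral {-pi..pi} h)) \<and>
       ((\<exists>\<theta>. 12 * inv_op m h \<theta> = 0) \<longrightarrow> (\<forall>\<theta>. h \<theta> = 0))"
    proof (intro allI impI)
      fix h :: "real \<Rightarrow> real"
      assume a: "continuous_on UNIV h \<and> (\<forall>\<theta>. h \<theta> \<ge> 0) \<and> periodic_m m h"
      then have "continuous_on UNIV h" "\<And>\<theta>. h \<theta> \<ge> 0" "periodic_m m h" by auto
      from main[OF this] show "(\<forall>\<theta>. 12 * inv_op m h \<theta> \<ge> C * (1 / (2 * pi) * integral {-pi..pi} h)) \<and>
       ((\<exists>\<theta>. 12 * inv_op m h \<theta> = 0) \<longrightarrow> (\<forall>\<theta>. h \<theta> = 0))" .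
    qed
  qed
qed

end
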